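(* Let $T$ be a finite rooted tree with root $\omega$ having $k\ge 1$ children. Partition the $k$ subtrees rooted at the children of $\omega$ into classes of pairwise isomorphic (rooted) subtrees; let $t$ be the number of classes, $k_i$ the number of subtrees in the $i$-th class, $T_i$ a representative of the $i$-th class, and $A_i$ the automorphism group of the rooted tree $T_i$ ($1\le i\le t$). If a finite group $G$ is representable on $T$, then there exists $1\le i\le t$ and a nontrivial homomorphism from $G$ to $W_{k_i}(A_i)$.
   Context: The automorphism group of a rooted tree is the group of tree automorphisms fixing the root; $G$ is representable on a rooted tree if there is a nontrivial homomorphism from $G$ to its automorphism group. For a group $A$ and $n\ge1$, $W_n(A)$ is the wreath product $S_n\wr A$, i.e. the semidirect product $A^n\rtimes S_n$ in which $S_n$ acts on the direct product $A^n$ by permuting coordinates. *)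

theory Defs
  imports "HOL-Algebra.Algebra" "HOL-Combinatorics.Permutations"
begin

text \<open>A finite rooted tree is given by a finite vertex set V, a root r \<in> V and a
parent map p (only relevant on V - {r}); every vertex reaches the root by
iterating p.  The edges are the pairs {v, p v} for v \<in> V - {r}.\<close>

definition rooted_tree :: "'v set \<Rightarrow> 'v \<Rightarrow> ('v \<Rightarrow> 'v) \<Rightarrow> bool" where
  "rooted_tree V r p \<longleftrightarrow> finite V \<and> r \<in> V \<and> (\<forall>v\<in>V - {r}. p v \<in> V)
     \<and> (\<forall>v\<in>V. \<exists>n. (p ^^ n) v = r)"

definition children :: "'v set \<Rightarrow> 'v \<Rightarrow> ('v \<Rightarrow> 'v) \<Rightarrow> 'v \<Rightarrow> 'v set" where
  "children V r p u = {v \<in> V - {r}. p v = u}"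

definition descendants :: "'v set \<Rightarrow> 'v \<Rightarrow> ('v \<Rightarrow> 'v) \<Rightarrow> 'v \<Rightarrow> 'v set" where
  "descendants V r p c = {v \<in> V. \<exists>n. (p ^^ n) v = c \<and> (\<forall>m<n. (p ^^ m) v \<noteq> r)}"

definition rtree_iso ::
  "'v set \<Rightarrow> 'v \<Rightarrow> ('v \<Rightarrow> 'v) \<Rightarrow> 'w set \<Rightarrow> 'w \<Rightarrow> ('w \<Rightarrow> 'w) \<Rightarrow> bool" where
  "rtree_iso V r p V' r' p' \<longleftrightarrow>
     (\<exists>f. bij_betw f V V' \<and> f r = r' \<and> (\<forall>v\<in>V - {r}. f (p v) = p' (f v)))"

definition tree_auts :: "'v set \<Rightarrow> 'v \<Rightarrow> ('v \<Rightarrow> 'v) \<Rightarrow> ('v \<Rightarrow> 'v) set" where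
  "tree_auts V r p = {f \<in> Bij V. f r = r \<and> (\<forall>v\<in>V - {r}. f (p v) = p (f v))}"

definition aut_group :: "'v set \<Rightarrow> 'v \<Rightarrow> ('v \<Rightarrow> 'v) \<Rightarrow> ('v \<Rightarrow> 'v) monoid" where
  "aut_group V r p = (BijGroup V) \<lparr>carrier := tree_auts V r p\<rparr>"

definition nontrivial_hom :: "('a, 'c) monoid_scheme \<Rightarrow> ('b, 'd) monoid_scheme \<Rightarrow> ('a \<Rightarrow> 'b) \<Rightarrow> bool" where
  "nontrivial_hom G H h \<longleftrightarrow> h \<in> hom G H \<and> (\<exists>g\<in>carrier G. h g \<noteq> monoid.one H)"

definition representable :: "('a, 'c) monoid_scheme \<Rightarrow> 'v set \<Rightarrow> 'v \<Rightarrow> ('v \<Rightarrow> 'v) \<Rightarrow> bool" where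
  "representable G V r p \<longleftrightarrow> (\<exists>h. nontrivial_hom G (aut_group V r p) h)"

text \<open>Wreath product W_n(A) = A^n \<rtimes> S_n, coordinates indexed by {..<n};
(a,\<sigma>)(b,\<tau>) = (a \<cdot> \<sigma>(b), \<sigma>\<tau>) with \<sigma>(b)_i = b_{\<sigma>^{-1} i}.\<close>

definition wreath :: "nat \<Rightarrow> ('a, 'c) monoid_scheme \<Rightarrow> ((nat \<Rightarrow> 'a) \<times> (nat \<Rightarrow> nat)) monoid" where
  "wreath n A =
    \<lparr>carrier = {(a, \<sigma>). a \<in> {..<n} \<rightarrow>\<^sub>E carrier A \<and> \<sigma> permutes {..<n}},
     monoid.mult = (\<lambda>(a, \<sigma>) (b, \<tau>). (\<lambda>i\<in>{..<n}. monoid.mult A (a i) (b (inv_into UNIV \<sigma> i)), \<sigma> \<circ> \<tau>)),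
     monoid.one = (\<lambda>i\<in>{..<n}. monoid.one A, id)\<rparr>"

end

theory Submission imports Defs begin

lemma path_in_V:
  assumes T: "rooted_tree V r p" and v: "v \<in> V" and "\<forall>m<n. (p ^^ m) v \<noteq> r"
  shows "(p ^^ n) v \<in> V"
  using assms(3)
proof (induction n)
  case 0 then show ?case using v by simp
next
  case (Suc n)
  then have "(p ^^ n) v \<in> V" "(p ^^ n) v \<noteq> r" by auto
  then show ?case using T unfolding rooted_tree_def by auto
qed

lemma desc_sub:
  assumes "d \<in> children V r p r"
  shows "descendants V r p d \<subseteq> V - {r}" "d \<in> descendants V r p d"
proof -
  show "d \<in> descendants V r p d" using assms
    by (auto simp: descendants_def children_def intro!: exI[of _ 0])
  show "descendants V r p d \<subseteq> V - {r}"
  proof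
    fix x assume x: "x \<in> descendants V r p d"
    then obtain k where k: "(p ^^ k) x = d" "\<forall>m<k. (p ^^ m) x \<noteq> r" "x \<in> V"
      by (auto simp: descendants_def)
    have "x \<noteq> r"
    proof (cases k)
      case 0 then show ?thesis using k assms by (auto simp: children_def)
    next
      case (Suc k') then show ?thesis using k(2)[rule_format, of 0] by auto
    qed
    then show "x \<in> V - {r}" using k by auto
  qed
qed

lemma desc_parent:
  assumes T: "rooted_tree V r p" and d: "d \<in> children V r p r"
    and u: "u \<in> descendants V r p d" and ud: "u \<noteq> d"
  shows "p u \<in> descendants V r p d"
proof -
  obtain k where k: "(p ^^ k) u = d" "\<forall>m<k. (p ^^ m) u \<noteq> r" "u \<in> V"
    using u by (auto simp: descendants_def)
  have "u \<in> V - {r}" using desc_sub(1)[OF d] u by auto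
  then have puV: "p u \<in> V" using T unfolding rooted_tree_def by auto
  obtain k' where k': "k = Suc k'" using k ud by (cases k) auto
  have "(p ^^ k') (p u) = d" using k(1) k' by (simp add: funpow_Suc_right del: funpow.simps)
  moreover have "\<forall>m<k'. (p ^^ m) (p u) \<noteq> r"
  proof (intro allI impI)
    fix m assume "m < k'"
    then have "(p ^^ Suc m) u \<noteq> r" using k(2) k' by auto
    then show "(p ^^ m) (p u) \<noteq> r" by (simp add: funpow_Suc_right del: funpow.simps)
  qed
  ultimately show ?thesis using puV by (auto simp: descendants_def)
qed

lemma aut_facts:
  assumes "\<phi> \<in> tree_auts V r p"
  shows "bij_betw \<phi> V V" "\<phi> r = r" "\<And>v. v \<in> V - {r} \<Longrightarrow> \<phi> (p v) = p (\<phi> v)"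
    "\<phi> \<in> extensional V"
  using assms by (auto simp: tree_auts_def Bij_def)

lemma aut_r_iff:
  assumes T: "rooted_tree V r p" and "\<phi> \<in> tree_auts V r p" and "x \<in> V"
  shows "\<phi> x = r \<longleftrightarrow> x = r"
proof -
  have "r \<in> V" using T by (simp add: rooted_tree_def)
  then show ?thesis using aut_facts[OF assms(2)] assms(3)
    by (metis bij_betw_inv_into_left)
qed

lemma aut_desc:
  assumes T: "rooted_tree V r p" and phi: "\<phi> \<in> tree_auts V r p"
    and d: "d \<in> children V r p r" and u: "u \<in> descendants V r p d"
  shows "\<phi> u \<in> descendants V r p (\<phi> d)"
proof -
  obtain k where k: "(p ^^ k) u = d" "\<forall>m<k. (p ^^ m) u \<noteq> r" "u \<in> V"
    using u by (auto simp: descendants_def)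
  note af = aut_facts[OF phi]
  have step: "m \<le> k \<Longrightarrow> (p ^^ m) (\<phi> u) = \<phi> ((p ^^ m) u)" for m
  proof (induction m)
    case 0 then show ?case by simp
  next
    case (Suc m)
    then have "(p ^^ m) u \<in> V - {r}" using path_in_V[OF T k(3), of m] k(2) by auto
    then show ?case using Suc af(3) by simp
  qed
  have "\<phi> u \<in> V" using af(1) k(3) by (auto simp: bij_betw_def)
  moreover have "(p ^^ k) (\<phi> u) = \<phi> d" using step[of k] k by simp
  moreover have "\<forall>m<k. (p ^^ m) (\<phi> u) \<noteq> r"
  proof (intro allI impI)
    fix m assume mk: "m < k"
    have "(p ^^ m) u \<in> V" using path_in_V[OF T k(3), of m] k(2) mk by auto
    then show "(p ^^ m) (\<phi> u) \<noteq> r" using step[of m] mk aut_r_iff[OF T phi] k(2) by auto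
  qed
  ultimately show ?thesis by (auto simp: descendants_def)
qed

lemma aut_inv:
  assumes T: "rooted_tree V r p" and phi: "\<phi> \<in> tree_auts V r p"
  shows "restrict (inv_into V \<phi>) V \<in> tree_auts V r p"
proof -
  note af = aut_facts[OF phi]
  have rV: "r \<in> V" using T by (simp add: rooted_tree_def)
  have B: "restrict (inv_into V \<phi>) V \<in> Bij V"
    by (rule restrict_inv_into_Bij) (use phi in \<open>auto simp: tree_auts_def\<close>)
  have "inv_into V \<phi> r = r" using af(1,2) rV by (metis bij_betw_inv_into_left)
  moreover have "restrict (inv_into V \<phi>) V (p w) = p (restrict (inv_into V \<phi>) V w)"
    if w: "w \<in> V - {r}" for w
  proof -
    define u where "u = inv_into V \<phi> w"
    have u: "u \<in> V" "\<phi> u = w" using af(1) w unfolding u_def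
      by (auto simp: bij_betw_def inv_into_into f_inv_into_f)
    have "u \<noteq> r" using u w af(2) by auto
    then have "\<phi> (p u) = p w" "p u \<in> V" using af(3) u T by (auto simp: rooted_tree_def)
    moreover have "p w \<in> V" using w T by (auto simp: rooted_tree_def)
    ultimately have "inv_into V \<phi> (p w) = p u"
      using af(1) by (metis bij_betw_inv_into_left)
    then show ?thesis using w \<open>p w \<in> V\<close> by (simp add: u_def)
  qed
  ultimately show ?thesis using B rV by (auto simp: tree_auts_def)
qed

lemma aut_child:
  assumes T: "rooted_tree V r p" and phi: "\<phi> \<in> tree_auts V r p"
    and d: "d \<in> children V r p r"
  shows "\<phi> d \<in> children V r p r"
proof -
  note af = aut_facts[OF phi]
  have "d \<in> V - {r}" "p d = r" using d by (auto simp: children_def)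
  moreover then have "\<phi> d \<in> V" using af(1) by (auto simp: bij_betw_def)
  ultimately show ?thesis using af(2) af(3)[of d] aut_r_iff[OF T phi, of d]
    by (auto simp: children_def)
qed

lemma aut_desc_eq:
  assumes T: "rooted_tree V r p" and phi: "\<phi> \<in> tree_auts V r p"
    and d: "d \<in> children V r p r"
  shows "\<phi> ` descendants V r p d = descendants V r p (\<phi> d)"
proof
  show "\<phi> ` descendants V r p d \<subseteq> descendants V r p (\<phi> d)"
    using aut_desc[OF T phi d] by auto
  show "descendants V r p (\<phi> d) \<subseteq> \<phi> ` descendants V r p d"
  proof
    fix w assume w: "w \<in> descendants V r p (\<phi> d)"
    define \<psi> where "\<psi> = restrict (inv_into V \<phi>) V"
    have psi: "\<psi> \<in> tree_auts V r p" using aut_inv[OF T phi] by (simp add: \<psi>_def)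
    have dV: "d \<in> V" using d by (auto simp: children_def)
    have wV: "w \<in> V" using w by (auto simp: descendants_def)
    have "\<psi> (\<phi> d) = d" using dV aut_facts(1)[OF phi] by (simp add: \<psi>_def bij_betw_inv_into_left bij_betw_apply)
    then have "\<psi> w \<in> descendants V r p d"
      using aut_desc[OF T psi aut_child[OF T phi d] w] by simp
    moreover have "\<phi> (\<psi> w) = w" using wV aut_facts(1)[OF phi]
      by (simp add: \<psi>_def bij_betw_def f_inv_into_f)
    ultimately show "w \<in> \<phi> ` descendants V r p d" by (metis imageI)
  qed
qed

lemma iso_refl: "rtree_iso A a p A a p"
  unfolding rtree_iso_def by (intro exI[of _ id]) auto

lemma iso_sym:
  assumes "rtree_iso A a p B b q" and "a \<in> A" and cl: "\<forall>v\<in>A - {a}. p v \<in> A"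
  shows "rtree_iso B b q A a p"
proof -
  obtain f where f: "bij_betw f A B" "f a = b" "\<forall>v\<in>A - {a}. f (p v) = q (f v)"
    using assms(1) by (auto simp: rtree_iso_def)
  define g where "g = inv_into A f"
  have "bij_betw g B A" using f(1) by (simp add: g_def bij_betw_inv_into)
  moreover have "g b = a" using f assms(2) unfolding g_def by (metis bij_betw_inv_into_left)
  moreover have "g (q w) = p (g w)" if w: "w \<in> B - {b}" for w
  proof -
    have u: "g w \<in> A" "f (g w) = w" using f(1) w
      by (auto simp: g_def bij_betw_def inv_into_into f_inv_into_f)
    then have "g w \<noteq> a" using w f(2) by auto
    then have "f (p (g w)) = q w" "p (g w) \<in> A" using f(3) u cl by auto
    then show ?thesis using f(1) by (metis g_def bij_betw_inv_into_left)
  qed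
  ultimately show ?thesis unfolding rtree_iso_def by blast
qed

lemma iso_trans:
  assumes "rtree_iso A a p B b q" "rtree_iso B b q C c s" "a \<in> A"
  shows "rtree_iso A a p C c s"
proof -
  obtain f where f: "bij_betw f A B" "f a = b" "\<forall>v\<in>A - {a}. f (p v) = q (f v)"
    using assms(1) by (auto simp: rtree_iso_def)
  obtain g where g: "bij_betw g B C" "g b = c" "\<forall>v\<in>B - {b}. g (q v) = s (g v)"
    using assms(2) by (auto simp: rtree_iso_def)
  have "\<forall>v\<in>A - {a}. g (f (p v)) = s (g (f v))"
  proof
    fix v assume v: "v \<in> A - {a}"
    have "f v \<in> B" using f(1) v by (auto intro: bij_betw_apply)
    moreover have "f v \<noteq> b"
    proof
      assume "f v = b"
      then have "f v = f a" using f(2) by simp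
      then show False using f(1) v assms(3) by (auto simp: bij_betw_def inj_on_def)
    qed
    ultimately have "f v \<in> B - {b}" by simp
    then show "g (f (p v)) = s (g (f v))" using f(3) g(3) v by auto
  qed
  then show ?thesis unfolding rtree_iso_def
    using bij_betw_trans[OF f(1) g(1)] f(2) g(2) by (intro exI[of _ "g \<circ> f"]) auto
qed

lemma aut_iso:
  assumes T: "rooted_tree V r p" and phi: "\<phi> \<in> tree_auts V r p"
    and d: "d \<in> children V r p r"
  shows "rtree_iso (descendants V r p d) d p (descendants V r p (\<phi> d)) (\<phi> d) p"
proof -
  have "inj_on \<phi> (descendants V r p d)"
    using aut_facts(1)[OF phi] desc_sub(1)[OF d] by (meson bij_betw_def inj_on_subset Diff_subset order_trans)
  then have "bij_betw \<phi> (descendants V r p d) (descendants V r p (\<phi> d))"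
    using aut_desc_eq[OF T phi d] by (simp add: bij_betw_def)
  moreover have "\<forall>v\<in>descendants V r p d - {d}. \<phi> (p v) = p (\<phi> v)"
    using aut_facts(3)[OF phi] desc_sub(1)[OF d] by auto
  ultimately show ?thesis unfolding rtree_iso_def by blast
qed


lemma aut_mult:
  assumes "\<phi> \<in> tree_auts V r p" "\<psi> \<in> tree_auts V r p"
  shows "\<phi> \<otimes>\<^bsub>aut_group V r p\<^esub> \<psi> = compose V \<phi> \<psi>"
  using assms by (simp add: aut_group_def BijGroup_def tree_auts_def)

lemma construction:
  assumes T: "rooted_tree V r p" and cC: "c \<in> children V r p r"
    and phi0: "\<phi>0 \<in> tree_auts V r p" and v: "v \<in> descendants V r p c" "\<phi>0 v \<noteq> v"
  shows "\<exists>\<Psi>. \<Psi> \<in> hom (aut_group V r p)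
           (wreath (card {c' \<in> children V r p r.
                        rtree_iso (descendants V r p c') c' p (descendants V r p c) c p})
                   (aut_group (descendants V r p c) c p))
         \<and> \<Psi> \<phi>0 \<noteq> monoid.one (wreath (card {c' \<in> children V r p r.
                        rtree_iso (descendants V r p c') c' p (descendants V r p c) c p})
                   (aut_group (descendants V r p c) c p))"
proof -
  define C where "C = children V r p r"
  define D where "D = descendants V r p"
  define K where "K = {c' \<in> C. rtree_iso (D c') c' p (D c) c p}"
  define n where "n = card K"
  define A where "A = aut_group (D c) c p"
  define W where "W = wreath n A"
  have cC': "c \<in> C" using cC by (simp add: C_def)
  have CV: "C \<subseteq> V - {r}" by (auto simp: C_def children_def)
  have Dsub: "\<And>d. d \<in> C \<Longrightarrow> D d \<subseteq> V - {r}" "\<And>d. d \<in> C \<Longrightarrow> d \<in> D d"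
    using desc_sub[where V=V and r=r and p=p] unfolding D_def C_def by blast+
  have Dpar: "\<And>d u. d \<in> C \<Longrightarrow> u \<in> D d \<Longrightarrow> u \<noteq> d \<Longrightarrow> p u \<in> D d"
    using desc_parent[OF T] unfolding D_def C_def by auto
  have Dimg: "\<And>\<phi> d. \<phi> \<in> tree_auts V r p \<Longrightarrow> d \<in> C \<Longrightarrow> \<phi> ` D d = D (\<phi> d)"
    using aut_desc_eq[OF T] unfolding D_def C_def by auto
  have Cimg: "\<And>\<phi> d. \<phi> \<in> tree_auts V r p \<Longrightarrow> d \<in> C \<Longrightarrow> \<phi> d \<in> C"
    using aut_child[OF T] unfolding C_def by auto
  have Diso: "\<And>\<phi> d. \<phi> \<in> tree_auts V r p \<Longrightarrow> d \<in> C \<Longrightarrow> rtree_iso (D d) d p (D (\<phi> d)) (\<phi> d) p"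
    using aut_iso[OF T] unfolding D_def C_def by auto
  have finV: "finite V" using T by (simp add: rooted_tree_def)
  have KC: "K \<subseteq> C" by (auto simp: K_def)
  have finK: "finite K" using KC CV finV by (meson Diff_subset finite_subset subset_trans)
  obtain e where e: "bij_betw e {..<n} K"
    using ex_bij_betw_nat_finite[OF finK] by (auto simp: n_def atLeast0LessThan)
  define E where "E = inv_into {..<n} e"
  have eK: "\<And>i. i < n \<Longrightarrow> e i \<in> K" using e by (auto intro: bij_betw_apply)
  have Ee: "\<And>i. i < n \<Longrightarrow> E (e i) = i" using e by (simp add: E_def bij_betw_inv_into_left)
  have eE: "\<And>d. d \<in> K \<Longrightarrow> e (E d) = d" using e by (simp add: E_def bij_betw_inv_into_right)
  have En: "\<And>d. d \<in> K \<Longrightarrow> E d < n" using e unfolding E_def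
    by (metis bij_betw_def inv_into_into lessThan_iff)
  have cK: "c \<in> K" using cC' iso_refl by (auto simp: K_def)
  define \<iota> where "\<iota> d = (SOME f. bij_betw f (D d) (D c) \<and> f d = c \<and> (\<forall>v\<in>D d - {d}. f (p v) = p (f v)))" for d
  have \<iota>: "bij_betw (\<iota> d) (D d) (D c) \<and> \<iota> d d = c \<and> (\<forall>v\<in>D d - {d}. \<iota> d (p v) = p (\<iota> d v))"
    if "d \<in> K" for d
  proof -
    have "\<exists>f. bij_betw f (D d) (D c) \<and> f d = c \<and> (\<forall>v\<in>D d - {d}. f (p v) = p (f v))"
      using that by (simp add: K_def rtree_iso_def)
    from someI_ex[OF this] show ?thesis unfolding \<iota>_def .
  qed
  define \<iota>' where "\<iota>' d = inv_into (D d) (\<iota> d)" for d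
  have \<iota>'b: "\<And>d. d \<in> K \<Longrightarrow> bij_betw (\<iota>' d) (D c) (D d)"
    using \<iota> unfolding \<iota>'_def by (meson bij_betw_inv_into)
  have \<iota>'\<iota>: "\<And>d x. d \<in> K \<Longrightarrow> x \<in> D d \<Longrightarrow> \<iota>' d (\<iota> d x) = x"
    using \<iota> unfolding \<iota>'_def by (meson bij_betw_inv_into_left)
  have \<iota>\<iota>': "\<And>d y. d \<in> K \<Longrightarrow> y \<in> D c \<Longrightarrow> \<iota> d (\<iota>' d y) = y"
    using \<iota> unfolding \<iota>'_def by (meson bij_betw_inv_into_right)
  have \<iota>'c: "\<And>d. d \<in> K \<Longrightarrow> \<iota>' d c = d"
    using \<iota>'\<iota> \<iota> Dsub KC by (metis subsetD)
  have \<iota>'p: "\<iota>' d (p y) = p (\<iota>' d y) \<and> \<iota>' d y \<in> D d - {d}"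
    if d: "d \<in> K" and y: "y \<in> D c - {c}" for d y
  proof -
    define u where "u = \<iota>' d y"
    have u: "u \<in> D d" "\<iota> d u = y" using y \<iota>'b[OF d] \<iota>\<iota>'[OF d] unfolding u_def
      by (auto intro: bij_betw_apply)
    have "u \<noteq> d" using u y \<iota>[OF d] by auto
    then have pu: "p u \<in> D d" using Dpar d KC u by auto
    have "\<iota> d (p u) = p y" using \<iota>[OF d] u \<open>u \<noteq> d\<close> by auto
    then have "\<iota>' d (p y) = p u" using \<iota>'\<iota>[OF d pu] by simp
    then show ?thesis using u \<open>u \<noteq> d\<close> unfolding u_def by auto
  qed
  have autK: "\<phi> d \<in> K" if phi: "\<phi> \<in> tree_auts V r p" and d: "d \<in> K" for \<phi> d
  proof -
    have dC: "d \<in> C" using d KC by auto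
    have "rtree_iso (D (\<phi> d)) (\<phi> d) p (D d) d p"
      by (rule iso_sym[OF Diso[OF phi dC]]) (use Dsub Dpar dC in auto)
    moreover have "rtree_iso (D d) d p (D c) c p" using d by (simp add: K_def)
    ultimately have "rtree_iso (D (\<phi> d)) (\<phi> d) p (D c) c p"
      by (rule iso_trans[OF _ _ Dsub(2)[OF Cimg[OF phi dC]]])
    then show ?thesis using Cimg[OF phi dC] by (simp add: K_def)
  qed
  have autKb: "bij_betw \<phi> K K" if phi: "\<phi> \<in> tree_auts V r p" for \<phi>
  proof -
    have "K \<subseteq> V" using KC CV by blast
    then have "inj_on \<phi> K" using aut_facts(1)[OF phi] unfolding bij_betw_def
      by (blast intro: inj_on_subset)
    moreover have "\<phi> ` K \<subseteq> K" using autK[OF phi] by auto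
    ultimately show ?thesis using endo_inj_surj[OF finK] unfolding bij_betw_def by blast
  qed
  define \<sigma> where "\<sigma> \<phi> = (\<lambda>i. if i < n then E (\<phi> (e i)) else i)" for \<phi> :: "'a \<Rightarrow> 'a"
  have \<sigma>perm: "\<sigma> \<phi> permutes {..<n}" if phi: "\<phi> \<in> tree_auts V r p" for \<phi>
  proof (rule bij_imp_permutes)
    have "bij_betw (E \<circ> \<phi> \<circ> e) {..<n} {..<n}"
      using bij_betw_trans[OF bij_betw_trans[OF e autKb[OF phi]] bij_betw_inv_into[OF e]]
      by (simp add: E_def comp_assoc)
    then show "bij_betw (\<sigma> \<phi>) {..<n} {..<n}"
      by (rule bij_betw_cong[THEN iffD1, rotated]) (simp add: \<sigma>_def)
    show "\<And>x. x \<notin> {..<n} \<Longrightarrow> \<sigma> \<phi> x = x" by (simp add: \<sigma>_def)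
  qed
  have \<sigma>e: "e (\<sigma> \<phi> i) = \<phi> (e i) \<and> \<sigma> \<phi> i < n"
    if phi: "\<phi> \<in> tree_auts V r p" and i: "i < n" for \<phi> i
  proof -
    have "\<phi> (e i) \<in> K" by (rule autK[OF phi eK[OF i]])
    then show ?thesis using eE En i unfolding \<sigma>_def by simp
  qed
  have inv\<sigma>: "inv_into UNIV (\<sigma> \<phi>) i < n \<and> \<phi> (e (inv_into UNIV (\<sigma> \<phi>) i)) = e i"
    if phi: "\<phi> \<in> tree_auts V r p" and i: "i < n" for \<phi> i
  proof -
    have "inv_into UNIV (\<sigma> \<phi>) permutes {..<n}" using permutes_inv[OF \<sigma>perm[OF phi]] .
    then have j: "inv_into UNIV (\<sigma> \<phi>) i < n" using i permutes_in_image by fastforce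
    moreover have "\<sigma> \<phi> (inv_into UNIV (\<sigma> \<phi>) i) = i" using permutes_inverses(1)[OF \<sigma>perm[OF phi]] .
    ultimately show ?thesis using \<sigma>e[OF phi j] by simp
  qed
  define a where "a \<phi> = (\<lambda>i\<in>{..<n}. \<lambda>x\<in>D c. \<iota> (e i) (\<phi> (\<iota>' (e (inv_into UNIV (\<sigma> \<phi>) i)) x)))" for \<phi>
  define \<Psi> where "\<Psi> \<phi> = (a \<phi>, \<sigma> \<phi>)" for \<phi>
  have Kdesc: "\<phi> ` D d = D (\<phi> d)" "inj_on \<phi> (D d)"
    if phi: "\<phi> \<in> tree_auts V r p" and d: "d \<in> K" for \<phi> d
  proof -
    have dC: "d \<in> C" using d KC by auto
    show "\<phi> ` D d = D (\<phi> d)" using Dimg[OF phi dC] .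
    have "D d \<subseteq> V" using Dsub(1)[OF dC] by blast
    then show "inj_on \<phi> (D d)" using aut_facts(1)[OF phi] unfolding bij_betw_def
      by (blast intro: inj_on_subset)
  qed
  have amem: "a \<phi> i \<in> tree_auts (D c) c p"
    if phi: "\<phi> \<in> tree_auts V r p" and i: "i < n" for \<phi> i
  proof -
    define j where "j = inv_into UNIV (\<sigma> \<phi>) i"
    have j: "j < n" "\<phi> (e j) = e i" using inv\<sigma>[OF phi i] by (auto simp: j_def)
    have ai: "a \<phi> i = (\<lambda>x\<in>D c. \<iota> (e i) (\<phi> (\<iota>' (e j) x)))"
      using i by (simp add: a_def j_def)
    have ejK: "e j \<in> K" and eiK: "e i \<in> K" using eK j i by auto
    have ejC: "e j \<in> C" and eiC: "e i \<in> C" using ejK eiK KC by auto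
    have b1: "bij_betw \<phi> (D (e j)) (D (e i))"
      using Kdesc[OF phi ejK] j(2) by (simp add: bij_betw_def)
    have "bij_betw (\<iota> (e i) \<circ> (\<phi> \<circ> \<iota>' (e j))) (D c) (D c)"
      using bij_betw_trans[OF bij_betw_trans[OF \<iota>'b[OF ejK] b1] conjunct1[OF \<iota>[OF eiK]]]
      by (simp add: comp_assoc)
    then have B: "bij_betw (a \<phi> i) (D c) (D c)" unfolding ai
      by (rule bij_betw_cong[THEN iffD1, rotated]) simp
    have ext: "a \<phi> i \<in> extensional (D c)" unfolding ai by simp
    have cD: "c \<in> D c" using Dsub(2)[OF cC'] .
    have fc: "a \<phi> i c = c" unfolding ai using cD \<iota>'c[OF ejK] j(2) \<iota>[OF eiK] by simp
    have comm: "a \<phi> i (p x) = p (a \<phi> i x)" if x: "x \<in> D c - {c}" for x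
    proof -
      define u where "u = \<iota>' (e j) x"
      have u: "\<iota>' (e j) (p x) = p u" "u \<in> D (e j) - {e j}" using \<iota>'p[OF ejK x] by (auto simp: u_def)
      have pxD: "p x \<in> D c" using Dpar[OF cC'] x by auto
      have uV: "u \<in> V - {r}" using u(2) Dsub(1)[OF ejC] by auto
      have pu: "\<phi> (p u) = p (\<phi> u)" using aut_facts(3)[OF phi uV] .
      have "\<phi> u \<in> D (e i)" using u(2) Kdesc(1)[OF phi ejK] j(2) by auto
      moreover have "\<phi> u \<noteq> e i"
      proof
        assume "\<phi> u = e i"
        then have "\<phi> u = \<phi> (e j)" using j(2) by simp
        moreover have "e j \<in> D (e j)" using Dsub(2)[OF ejC] .
        ultimately show False using Kdesc(2)[OF phi ejK] u(2) by (auto simp: inj_on_def)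
      qed
      ultimately have "\<iota> (e i) (p (\<phi> u)) = p (\<iota> (e i) (\<phi> u))" using \<iota>[OF eiK] by auto
      then show ?thesis unfolding ai using x pxD u(1) pu by (simp add: u_def)
    qed
    show ?thesis using B ext fc comm by (simp add: tree_auts_def Bij_def)
  qed
  have carrA: "carrier A = tree_auts (D c) c p" by (simp add: A_def aut_group_def BijGroup_def)
  have carrG: "carrier (aut_group V r p) = tree_auts V r p" by (simp add: aut_group_def BijGroup_def)
  have multA: "\<And>f g. f \<in> tree_auts (D c) c p \<Longrightarrow> g \<in> tree_auts (D c) c p \<Longrightarrow> f \<otimes>\<^bsub>A\<^esub> g = compose (D c) f g"
    unfolding A_def by (rule aut_mult)
  have PsiC: "\<Psi> \<phi> \<in> carrier W" if phi: "\<phi> \<in> tree_auts V r p" for \<phi>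
  proof -
    have "a \<phi> \<in> {..<n} \<rightarrow>\<^sub>E carrier A" using amem[OF phi] carrA by (auto simp: a_def)
    then show ?thesis using \<sigma>perm[OF phi] by (simp add: W_def wreath_def \<Psi>_def)
  qed
  have eV: "\<And>i. i < n \<Longrightarrow> e i \<in> V" using eK KC CV by blast
  have Psimult: "\<Psi> (compose V \<phi> \<psi>) = \<Psi> \<phi> \<otimes>\<^bsub>W\<^esub> \<Psi> \<psi>"
    if phi: "\<phi> \<in> tree_auts V r p" and psi: "\<psi> \<in> tree_auts V r p" for \<phi> \<psi>
  proof -
    have sc: "\<sigma> (compose V \<phi> \<psi>) = \<sigma> \<phi> \<circ> \<sigma> \<psi>"
    proof
      fix i show "\<sigma> (compose V \<phi> \<psi>) i = (\<sigma> \<phi> \<circ> \<sigma> \<psi>) i"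
      proof (cases "i < n")
        case True
        then show ?thesis using \<sigma>e[OF psi True] eV[OF True] by (simp add: \<sigma>_def compose_eq)
      next
        case False then show ?thesis by (simp add: \<sigma>_def)
      qed
    qed
    have ic: "inv_into UNIV (\<sigma> \<phi> \<circ> \<sigma> \<psi>) = inv_into UNIV (\<sigma> \<psi>) \<circ> inv_into UNIV (\<sigma> \<phi>)"
      by (rule o_inv_distrib[OF permutes_bij[OF \<sigma>perm[OF phi]] permutes_bij[OF \<sigma>perm[OF psi]]])
    have ac: "a (compose V \<phi> \<psi>) = (\<lambda>i\<in>{..<n}. a \<phi> i \<otimes>\<^bsub>A\<^esub> a \<psi> (inv_into UNIV (\<sigma> \<phi>) i))"
    proof
      fix i show "a (compose V \<phi> \<psi>) i = (\<lambda>i\<in>{..<n}. a \<phi> i \<otimes>\<^bsub>A\<^esub> a \<psi> (inv_into UNIV (\<sigma> \<phi>) i)) i"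
      proof (cases "i < n")
        case i: True
        define j where "j = inv_into UNIV (\<sigma> \<phi>) i"
        define k where "k = inv_into UNIV (\<sigma> \<psi>) j"
        have j: "j < n" "\<phi> (e j) = e i" using inv\<sigma>[OF phi i] by (auto simp: j_def)
        have k: "k < n" "\<psi> (e k) = e j" using inv\<sigma>[OF psi j(1)] by (auto simp: k_def)
        have ejK: "e j \<in> K" and ekK: "e k \<in> K" using eK j k by auto
        have m: "a \<phi> i \<otimes>\<^bsub>A\<^esub> a \<psi> j = compose (D c) (a \<phi> i) (a \<psi> j)"
          using multA amem[OF phi i] amem[OF psi j(1)] by simp
        have "a (compose V \<phi> \<psi>) i = compose (D c) (a \<phi> i) (a \<psi> j)"
        proof
          fix x show "a (compose V \<phi> \<psi>) i x = compose (D c) (a \<phi> i) (a \<psi> j) x"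
          proof (cases "x \<in> D c")
            case x: True
            define w where "w = \<iota>' (e k) x"
            have wD: "w \<in> D (e k)" using \<iota>'b[OF ekK] x by (auto simp: w_def intro: bij_betw_apply)
            have wV: "w \<in> V" using wD Dsub(1) ekK KC by blast
            have psw: "\<psi> w \<in> D (e j)" using wD Kdesc(1)[OF psi ekK] k(2) by auto
            have l: "a (compose V \<phi> \<psi>) i x = \<iota> (e i) (\<phi> (\<psi> w))"
              using i x wV by (simp add: a_def sc ic j_def[symmetric] k_def[symmetric] w_def compose_eq)
            have r1: "a \<psi> j x = \<iota> (e j) (\<psi> w)"
              using j x by (simp add: a_def k_def w_def)
            have r1D: "a \<psi> j x \<in> D c" using r1 psw \<iota>[OF ejK] by (auto intro: bij_betw_apply)
            have r2: "a \<phi> i (a \<psi> j x) = \<iota> (e i) (\<phi> (\<psi> w))"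
              using i r1D r1 \<iota>'\<iota>[OF ejK psw] by (simp add: a_def j_def[symmetric])
            show ?thesis using l r2 x by (simp add: compose_eq)
          next
            case False then show ?thesis using i by (simp add: a_def compose_def)
          qed
        qed
        then show ?thesis using i m by (simp add: j_def)
      next
        case False then show ?thesis by (simp add: a_def)
      qed
    qed
    show ?thesis by (simp add: \<Psi>_def W_def wreath_def sc ac)
  qed
  have hom: "\<Psi> \<in> hom (aut_group V r p) W"
    unfolding hom_def carrG by (auto simp: aut_mult PsiC Psimult)
  have nt: "\<Psi> \<phi>0 \<noteq> \<one>\<^bsub>W\<^esub>"
  proof
    assume eq: "\<Psi> \<phi>0 = \<one>\<^bsub>W\<^esub>"
    have oneA: "\<one>\<^bsub>A\<^esub> = (\<lambda>x\<in>D c. x)" by (simp add: A_def aut_group_def BijGroup_def)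
    have sid: "\<sigma> \<phi>0 = id" and aid: "a \<phi>0 = (\<lambda>i\<in>{..<n}. \<lambda>x\<in>D c. x)"
      using eq by (simp_all add: \<Psi>_def W_def wreath_def oneA)
    define j0 where "j0 = E c"
    have j0: "j0 < n" "e j0 = c" using En[OF cK] eE[OF cK] by (auto simp: j0_def)
    have "\<phi>0 c = c" using \<sigma>e[OF phi0 j0(1)] sid j0(2) by simp
    have vD: "v \<in> D c" using v(1) by (simp add: D_def)
    have ivD: "\<iota> c v \<in> D c" using \<iota>[OF cK] vD by (auto intro: bij_betw_apply)
    have "a \<phi>0 j0 (\<iota> c v) = \<iota> c v" using aid j0 ivD by simp
    moreover have "a \<phi>0 j0 (\<iota> c v) = \<iota> c (\<phi>0 v)"
      using j0 ivD sid \<iota>'\<iota>[OF cK vD] by (simp add: a_def)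
    ultimately have "\<iota> c (\<phi>0 v) = \<iota> c v" by simp
    moreover have "\<phi>0 v \<in> D c" using Kdesc(1)[OF phi0 cK] vD \<open>\<phi>0 c = c\<close> by auto
    ultimately show False using \<iota>[OF cK] vD v(2) by (auto simp: bij_betw_def inj_on_def)
  qed
  from hom nt show ?thesis unfolding W_def A_def n_def K_def C_def D_def by blast
qed

lemma top_child:
  assumes T: "rooted_tree V r p" and v: "v \<in> V" "v \<noteq> r"
  shows "\<exists>c\<in>children V r p r. v \<in> descendants V r p c"
proof -
  have ex: "\<exists>n. (p ^^ n) v = r" using T v by (auto simp: rooted_tree_def)
  define N where "N = (LEAST n. (p ^^ n) v = r)"
  have N: "(p ^^ N) v = r" unfolding N_def using LeastI_ex[OF ex] .
  have lt: "\<forall>m<N. (p ^^ m) v \<noteq> r" unfolding N_def using not_less_Least by blast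
  obtain M where M: "N = Suc M" using N v by (cases N) auto
  define c where "c = (p ^^ M) v"
  have cV: "c \<in> V" unfolding c_def using path_in_V[OF T v(1)] lt M by auto
  have cr: "c \<noteq> r" using lt M by (auto simp: c_def)
  have pc: "p c = r" using N M by (simp add: c_def)
  have "c \<in> children V r p r" using cV cr pc by (simp add: children_def)
  moreover have ltM: "\<forall>m<M. (p ^^ m) v \<noteq> r" using lt M by auto
  then have "(p ^^ M) v = c \<and> (\<forall>m<M. (p ^^ m) v \<noteq> r)" by (simp add: c_def)
  then have "v \<in> descendants V r p c" using v(1) unfolding descendants_def by blast
  ultimately show ?thesis by blast
qed

theorem mainTheorem13:
  fixes G :: "('g, 'z) monoid_scheme" and V :: "'v set" and r :: 'v and p :: "'v \<Rightarrow> 'v"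
  assumes "rooted_tree V r p"
    and "children V r p r \<noteq> {}"
    and "group G" and "finite (carrier G)"
    and "representable G V r p"
  shows "\<exists>c\<in>children V r p r. \<exists>h. nontrivial_hom G
           (wreath (card {c' \<in> children V r p r.
                        rtree_iso (descendants V r p c') c' p (descendants V r p c) c p})
                   (aut_group (descendants V r p c) c p)) h"
proof -
  obtain h g where h: "h \<in> hom G (aut_group V r p)" and g: "g \<in> carrier G"
    and ng: "h g \<noteq> \<one>\<^bsub>aut_group V r p\<^esub>"
    using assms(5) unfolding representable_def nontrivial_hom_def by blast
  define \<phi>0 where "\<phi>0 = h g"
  have phi0: "\<phi>0 \<in> tree_auts V r p"
    using h g unfolding \<phi>0_def hom_def by (auto simp: aut_group_def BijGroup_def)
  have one: "\<one>\<^bsub>aut_group V r p\<^esub> = (\<lambda>x\<in>V. x)" by (simp add: aut_group_def BijGroup_def)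
  have "\<exists>v\<in>V. \<phi>0 v \<noteq> v"
  proof (rule ccontr)
    assume "\<not> ?thesis"
    then have "\<phi>0 = (\<lambda>x\<in>V. x)" using aut_facts(4)[OF phi0]
      by (auto simp: extensional_def)
    then show False using ng one by (simp add: \<phi>0_def)
  qed
  then obtain v where vV: "v \<in> V" and vm: "\<phi>0 v \<noteq> v" by blast
  have "v \<noteq> r" using vm aut_facts(2)[OF phi0] by auto
  then obtain c where c: "c \<in> children V r p r" and vc: "v \<in> descendants V r p c"
    using top_child[OF assms(1) vV] by blast
  define Wc where "Wc = wreath (card {c' \<in> children V r p r.
                        rtree_iso (descendants V r p c') c' p (descendants V r p c) c p})
                   (aut_group (descendants V r p c) c p)"
  obtain \<Psi> where Psi: "\<Psi> \<in> hom (aut_group V r p) Wc" and nt: "\<Psi> \<phi>0 \<noteq> \<one>\<^bsub>Wc\<^esub>"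
    using construction[OF assms(1) c phi0 vc vm] unfolding Wc_def by blast
  have hc: "\<Psi> \<circ> h \<in> hom G Wc" by (rule hom_compose[OF h Psi])
  have "(\<Psi> \<circ> h) g \<noteq> \<one>\<^bsub>Wc\<^esub>" using nt by (simp add: \<phi>0_def)
  then have "nontrivial_hom G Wc (\<Psi> \<circ> h)" unfolding nontrivial_hom_def using hc g by blast
  then show ?thesis using c unfolding Wc_def by blast
qed

end
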